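(* Let $(X,d,\mu)$, $p$, $\underline{Q}_\mu$ be as in the context. Fix $\underline{\theta}\in[0,\min\{p,\underline{Q}_\mu\})$, $\theta\in[\underline{\theta},p)$, an integer $N\ge2$, numbers $0\le\theta_1<\dots<\theta_N=\underline{\theta}$, closed sets $S^i\in\mathcal{ADR}_{\theta_i}(X)$, and $\mathfrak m_k:=\sum_{i=1}^N2^{k(\theta-\theta_i)}\mathcal H_{\theta_i}\lfloor_{S^i}$, $k\in\mathbb N_0$. Then for each $c\ge1$ there is a constant $C>0$ such that the following holds. If $k\in\mathbb N_0$, $B=cB_k(\underline x)$ with $\underline x\in X$, and $\mathcal I\subset\{1,\dots,N\}$ are such that for each $i\in\mathcal I$ there is $x_i\in S^i$ with $B_k(x_i)\subset B$, and $B\cap S^j=\emptyset$ for all $j\in\{1,\dots,N\}\setminus\mathcal I$, then for every $f\in L^{loc}_1(\mathfrak m_0)$, $$\mathcal E_{\mathfrak m_k}(f,B)\le C\Big(\sum_{i\in\mathcal I}\mathcal E_{\mathcal H_{\theta_i}\lfloor_{S^i}}(f,B)+\sum_{\substack{i,j\in\mathcal I\\ i\ne j}}\mathrm{Av}_{B\cap S^i,\mathcal H_{\theta_i}}\mathrm{Av}_{B\cap S^j,\mathcal H_{\theta_j}}|f(y')-f(z')|\Big).$$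
   Context: Standing setting: $(X,d)$ complete separable metric space, $\mu$ a Borel regular locally finite outer measure, $\operatorname{supp}\mu=X$, uniformly locally doubling (for every $R>0$, $\sup_{r\in(0,R]}\sup_x\mu(B_{2r}(x))/\mu(B_r(x))<\infty$). Balls are closed, $B_r(x)=\{y:d(x,y)\le r\}$, $cB_r(x)=B_{cr}(x)$, $B_k(x)=B_{2^{-k}}(x)$. A fixed $p\in(1,\infty)$; $X$ supports a weak local $(1,p)$-Poincaré inequality (for every $R>0$ there are $C,\lambda\ge1$ with $\inf_c\frac{1}{\mu(B_r(x))}\int_{B_r(x)}|f-c|d\mu\le Cr(\frac{1}{\mu(B_{\lambda r}(x))}\int_{B_{\lambda r}(x)}(\operatorname{lip}f)^pd\mu)^{1/p}$ for Lipschitz $f$, $x\in X$, $r\in(0,R]$). $\underline{Q}_\mu$ is the infimum of $Q>0$ such that for every $R>0$ there is $C$ with $(r_{B'}/r_B)^Q\le C\mu(B')/\mu(B)$ for balls $B'\subset B$, $0<r_{B'}\le r_B\le R$. Notation: $\mathrm{Av}_{G,\mathfrak m}(g)=\mathfrak m(G)^{-1}\int_Gg\,d\mathfrak m$ if $\mathfrak m(G)>0$, else $0$ (the double mean in the claim is over $y'\in B\cap S^i$ and $z'\in B\cap S^j$); $\mathcal E_{\mathfrak m}(g,G):=\inf_{c\in\mathbb R}\mathrm{Av}_{G,\mathfrak m}(|g-c|)$; $\mathfrak m\lfloor_S(E)=\mathfrak m(E\cap S)$. $\mathcal H_{\vartheta,\delta}(E):=\inf\{\sum\mu(B_{r_i}(x_i))r_i^{-\vartheta}:E\subset\bigcup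 B_{r_i}(x_i),0<r_i<\delta\}$, $\mathcal H_\vartheta=\lim_{\delta\to0}\mathcal H_{\vartheta,\delta}$. $\mathcal{ADR}_\vartheta(X)$: closed $S'$ with $\varkappa_1\mu(B_r(x))r^{-\vartheta}\le\mathcal H_\vartheta(B_r(x)\cap S')\le\varkappa_2\mu(B_r(x))r^{-\vartheta}$ for $x\in S'$, $r\in(0,1]$. *)

theory Defs
  imports "HOL-Analysis.Analysis" "HOL-Probability.Probability"
begin

text \<open>Closed balls B_r(x) are cball x r. The measure mu is represented by its
restriction to the Borel sets (mu is Borel regular, so this determines it).\<close>

definition mu_standing :: "'a::polish_space measure \<Rightarrow> bool" where
  "mu_standing mu \<longleftrightarrow> sets mu = sets borel
     \<and> (\<forall>x. \<exists>r>0. emeasure mu (cball x r) < \<infinity>)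
     \<and> (\<forall>x r. r > 0 \<longrightarrow> emeasure mu (cball x r) > 0)"

definition unif_loc_doubling :: "'a::metric_space measure \<Rightarrow> bool" where
  "unif_loc_doubling mu \<longleftrightarrow> (\<forall>R>0. \<exists>D::real. \<forall>r\<in>{0<..R}. \<forall>x.
      emeasure mu (cball x (2*r)) \<le> ennreal D * emeasure mu (cball x r))"

text \<open>Mean value, with the convention Av = 0 if the measure of G vanishes.\<close>
definition Av :: "'a measure \<Rightarrow> 'a set \<Rightarrow> ('a \<Rightarrow> ennreal) \<Rightarrow> ennreal" where
  "Av m G g = (if emeasure m G > 0 then (\<integral>\<^sup>+x\<in>G. g x \<partial>m) / emeasure m G else 0)"

definition Osc :: "'a measure \<Rightarrow> ('a \<Rightarrow> real) \<Rightarrow> 'a set \<Rightarrow> ennreal" where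
  "Osc m g G = (INF c\<in>(UNIV::real set). Av m G (\<lambda>x. ennreal \<bar>g x - c\<bar>))"

definition lip :: "('a::metric_space \<Rightarrow> real) \<Rightarrow> 'a \<Rightarrow> ennreal" where
  "lip f x = Limsup (at_right 0) (\<lambda>r::real. SUP y\<in>cball x r. ennreal (\<bar>f y - f x\<bar> / r))"

definition weak_local_poincare :: "'a::metric_space measure \<Rightarrow> real \<Rightarrow> bool" where
  "weak_local_poincare mu p \<longleftrightarrow> (\<forall>R>0. \<exists>C\<ge>1. \<exists>lam\<ge>1.
     \<forall>f::'a \<Rightarrow> real. (\<exists>L. L-lipschitz_on UNIV f) \<longrightarrow>
     (\<forall>x. \<forall>r\<in>{0<..R}.
        Osc mu f (cball x r) \<le>
        ennreal (C * r * (enn2real (Av mu (cball x (lam * r))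
                    (\<lambda>y. ennreal (enn2real (lip f y) powr p)))) powr (1/p))))"

definition lower_dim :: "'a::metric_space measure \<Rightarrow> real" where
  "lower_dim mu = Inf {Q::real. Q > 0 \<and> (\<forall>R>0. \<exists>C::real. \<forall>x r x' r'.
      cball x' r' \<subseteq> cball x r \<and> 0 < r' \<and> r' \<le> r \<and> r \<le> R \<longrightarrow>
      ennreal ((r'/r) powr Q) * emeasure mu (cball x r) \<le> ennreal C * emeasure mu (cball x' r'))}"

definition hcont_delta :: "'a::metric_space measure \<Rightarrow> real \<Rightarrow> real \<Rightarrow> 'a set \<Rightarrow> ennreal" where
  "hcont_delta mu th delta E = (INF Cv\<in>{Cv::('a \<times> real) set. countable Cv
        \<and> (\<forall>(x,r)\<in>Cv. 0 < r \<and> r < delta) \<and> E \<subseteq> (\<Union>(x,r)\<in>Cv. cball x r)}.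
      \<integral>\<^sup>+xr. emeasure mu (cball (fst xr) (snd xr)) * ennreal (snd xr powr (-th)) \<partial>count_space Cv)"

definition hmeasure :: "'a::metric_space measure \<Rightarrow> real \<Rightarrow> 'a set \<Rightarrow> ennreal" where
  "hmeasure mu th E = (SUP delta\<in>{0<..}. hcont_delta mu th delta E)"

definition hrestr :: "'a::metric_space measure \<Rightarrow> real \<Rightarrow> 'a set \<Rightarrow> 'a measure" where
  "hrestr mu th S = measure_of UNIV (sets borel) (\<lambda>A. hmeasure mu th (A \<inter> S))"

definition ADR :: "'a::metric_space measure \<Rightarrow> real \<Rightarrow> 'a set set" where
  "ADR mu th = {S. closed S \<and> (\<exists>k1 k2::real. k1 > 0 \<and> k2 > 0 \<and>
      (\<forall>x\<in>S. \<forall>r\<in>{0<..1}.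
         ennreal k1 * emeasure mu (cball x r) * ennreal (r powr (-th)) \<le> hmeasure mu th (cball x r \<inter> S)
       \<and> hmeasure mu th (cball x r \<inter> S) \<le> ennreal k2 * emeasure mu (cball x r) * ennreal (r powr (-th))))}"

definition mk :: "'a::metric_space measure \<Rightarrow> real \<Rightarrow> (nat \<Rightarrow> real) \<Rightarrow> (nat \<Rightarrow> 'a set) \<Rightarrow> nat \<Rightarrow> nat \<Rightarrow> 'a measure" where
  "mk mu th ths S N k = measure_of UNIV (sets borel)
     (\<lambda>A. \<Sum>i\<in>{1..N}. ennreal (2 powr (real k * (th - ths i))) * hmeasure mu (ths i) (A \<inter> S i))"

definition loc_integrable :: "'a::metric_space measure \<Rightarrow> ('a \<Rightarrow> real) \<Rightarrow> bool" where
  "loc_integrable m f \<longleftrightarrow> f \<in> borel_measurable m \<and> (\<forall>x. \<exists>r>0. set_integrable m (cball x r) f)"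

end

theory Submission
  imports Defs
begin

definition covers :: "real \<Rightarrow> 'a::metric_space set \<Rightarrow> ('a \<times> real) set set" where
  "covers d E = {Cv. countable Cv \<and> (\<forall>(x,r)\<in>Cv. 0 < r \<and> r < d) \<and> E \<subseteq> (\<Union>(x,r)\<in>Cv. cball x r)}"

definition hc :: "('a::metric_space \<times> real \<Rightarrow> ennreal) \<Rightarrow> real \<Rightarrow> 'a set \<Rightarrow> ennreal" where
  "hc W d E = (INF Cv\<in>covers d E. \<integral>\<^sup>+xr. W xr \<partial>count_space Cv)"

definition hm :: "('a::metric_space \<times> real \<Rightarrow> ennreal) \<Rightarrow> 'a set \<Rightarrow> ennreal" where
  "hm W E = (SUP d\<in>{0<..}. hc W d E)"

lemma hc_empty: "0 < d \<Longrightarrow> hc W d {} = 0"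
proof -
  assume "0 < d"
  have "{} \<in> covers d {}" by (auto simp: covers_def)
  hence "hc W d {} \<le> (\<integral>\<^sup>+xr. W xr \<partial>count_space {})" unfolding hc_def by (rule INF_lower)
  also have "\<dots> = 0" by (simp add: nn_integral_count_space_finite)
  finally show ?thesis by simp
qed

lemma hm_empty: "hm W {} = 0"
  unfolding hm_def by (simp add: hc_empty)

lemma hc_mono: "A \<subseteq> B \<Longrightarrow> hc W d A \<le> hc W d B"
  unfolding hc_def by (rule INF_superset_mono) (auto simp: covers_def)

lemma hc_anti: "d1 \<le> d2 \<Longrightarrow> hc W d2 A \<le> hc W d1 A"
  unfolding hc_def by (rule INF_superset_mono) (fastforce simp: covers_def)+

lemma hm_mono: "A \<subseteq> B \<Longrightarrow> hm W A \<le> hm W B"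
  unfolding hm_def by (rule SUP_mono) (auto intro: hc_mono)

lemma hc_le_hm: "0 < d \<Longrightarrow> hc W d A \<le> hm W A"
  unfolding hm_def by (rule SUP_upper) auto

lemma ennreal_term_le_suminf: "(f::nat \<Rightarrow> ennreal) n \<le> (\<Sum>n. f n)"
  using sum_le_suminf[of f "{n}"] by (simp add: summableI)

lemma count_space_integral_union_le:
  fixes W :: "'b \<Rightarrow> ennreal"
  shows "(\<integral>\<^sup>+xr. W xr \<partial>count_space (\<Union>n. C n)) \<le> (\<Sum>n. \<integral>\<^sup>+xr. W xr \<partial>count_space (C n))"
proof -
  have "(\<integral>\<^sup>+xr. W xr \<partial>count_space (\<Union>n. C n)) = (\<integral>\<^sup>+xr. W xr * indicator (\<Union>n. C n) xr \<partial>count_space UNIV)"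
    by (simp add: nn_integral_count_space_indicator)
  also have "\<dots> \<le> (\<integral>\<^sup>+xr. (\<Sum>n. W xr * indicator (C n) xr) \<partial>count_space UNIV)"
  proof (rule nn_integral_mono)
    fix x
    show "W x * indicator (\<Union>n. C n) x \<le> (\<Sum>n. W x * indicator (C n) x)"
    proof (cases "x \<in> (\<Union>n. C n)")
      case True
      then obtain n where n: "x \<in> C n" by auto
      have "W x * indicator (C n) x \<le> (\<Sum>n. W x * indicator (C n) x)"
        by (rule ennreal_term_le_suminf)
      with n True show ?thesis by simp
    qed simp
  qed
  also have "\<dots> = (\<Sum>n. \<integral>\<^sup>+xr. W xr * indicator (C n) xr \<partial>count_space UNIV)"
    by (rule nn_integral_suminf) simp
  also have "\<dots> = (\<Sum>n. \<integral>\<^sup>+xr. W xr \<partial>count_space (C n))"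
    by (simp add: nn_integral_count_space_indicator)
  finally show ?thesis .
qed

lemma count_space_integral_mono_set:
  fixes W :: "'b \<Rightarrow> ennreal"
  assumes "A \<subseteq> B" shows "(\<integral>\<^sup>+xr. W xr \<partial>count_space A) \<le> (\<integral>\<^sup>+xr. W xr \<partial>count_space B)"
proof -
  have "(\<integral>\<^sup>+xr. W xr \<partial>count_space A) = (\<integral>\<^sup>+xr. W xr * indicator A xr \<partial>count_space UNIV)"
    by (simp add: nn_integral_count_space_indicator)
  also have "\<dots> \<le> (\<integral>\<^sup>+xr. W xr * indicator B xr \<partial>count_space UNIV)"
    using assms by (intro nn_integral_mono) (auto simp: indicator_def)
  also have "\<dots> = (\<integral>\<^sup>+xr. W xr \<partial>count_space B)"
    by (simp add: nn_integral_count_space_indicator)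
  finally show ?thesis .
qed

lemma count_space_integral_Un_disj:
  fixes W :: "'b \<Rightarrow> ennreal"
  assumes "A \<inter> B = {}" shows "(\<integral>\<^sup>+xr. W xr \<partial>count_space (A \<union> B)) =
     (\<integral>\<^sup>+xr. W xr \<partial>count_space A) + (\<integral>\<^sup>+xr. W xr \<partial>count_space B)"
proof -
  have "(\<integral>\<^sup>+xr. W xr \<partial>count_space (A \<union> B)) = (\<integral>\<^sup>+xr. W xr * indicator (A \<union> B) xr \<partial>count_space UNIV)"
    by (simp add: nn_integral_count_space_indicator)
  also have "\<dots> = (\<integral>\<^sup>+xr. W xr * indicator A xr + W xr * indicator B xr \<partial>count_space UNIV)"
    using assms by (intro nn_integral_cong) (auto simp: indicator_def)
  also have "\<dots> = (\<integral>\<^sup>+xr. W xr * indicator A xr \<partial>count_space UNIV) + (\<integral>\<^sup>+xr. W xr * indicator B xr \<partial>count_space UNIV)"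
    by (rule nn_integral_add) auto
  also have "\<dots> = (\<integral>\<^sup>+xr. W xr \<partial>count_space A) + (\<integral>\<^sup>+xr. W xr \<partial>count_space B)"
    by (simp add: nn_integral_count_space_indicator)
  finally show ?thesis .
qed

lemma hc_countable_subadd: "hc W d (\<Union>n. A n) \<le> (\<Sum>n. hc W d (A n))"
proof (rule ennreal_le_epsilon)
  fix e :: real assume fin: "(\<Sum>n. hc W d (A n)) < top" and e: "0 < e"
  have each: "hc W d (A n) < top" for n
    using ennreal_term_le_suminf[of "\<lambda>n. hc W d (A n)" n] fin by (simp add: le_less_trans)
  have "\<exists>Cv\<in>covers d (A n). (\<integral>\<^sup>+xr. W xr \<partial>count_space Cv) < hc W d (A n) + ennreal (e * (1/2)^Suc n)" for n
  proof -
    have "hc W d (A n) < hc W d (A n) + ennreal (e * (1/2)^Suc n)"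
      using each[of n] e by (simp add: ennreal_add_left_cancel_less)
    then show ?thesis unfolding hc_def[of W d "A n"] by (simp add: INF_less_iff)
  qed
  then obtain Cv where Cv: "\<And>n. Cv n \<in> covers d (A n)"
    and Cvl: "\<And>n. (\<integral>\<^sup>+xr. W xr \<partial>count_space (Cv n)) < hc W d (A n) + ennreal (e * (1/2)^Suc n)"
    by metis
  have U: "(\<Union>n. Cv n) \<in> covers d (\<Union>n. A n)"
    using Cv unfolding covers_def by (auto simp: subset_eq) blast+
  have "hc W d (\<Union>n. A n) \<le> (\<integral>\<^sup>+xr. W xr \<partial>count_space (\<Union>n. Cv n))"
    unfolding hc_def by (rule INF_lower[OF U])
  also have "\<dots> \<le> (\<Sum>n. \<integral>\<^sup>+xr. W xr \<partial>count_space (Cv n))"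
    by (rule count_space_integral_union_le)
  also have "\<dots> \<le> (\<Sum>n. hc W d (A n) + ennreal (e * (1/2)^Suc n))"
    by (intro suminf_le less_imp_le[OF Cvl]) (auto simp: summableI)
  also have "\<dots> = (\<Sum>n. hc W d (A n)) + (\<Sum>n. ennreal (e * (1/2)^Suc n))"
    by (rule suminf_add[symmetric]) (auto simp: summableI)
  also have "(\<Sum>n. ennreal (e * (1/2)^Suc n)) = ennreal e"
  proof -
    have s: "summable (\<lambda>n. e * (1/2::real)^Suc n)"
      by (intro summable_mult summable_geometric[THEN summable_Suc_iff[THEN iffD2]]) simp
    have "(\<Sum>n. e * (1/2::real)^Suc n) = e * (\<Sum>n. (1/2::real)^Suc n)"
      by (rule suminf_mult) (rule summable_geometric[THEN summable_Suc_iff[THEN iffD2]], simp)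
    also have "(\<Sum>n. (1/2::real)^Suc n) = 1"
    proof -
      have "(\<Sum>n. (1/2::real)^n / 2) = (\<Sum>n. (1/2::real)^n) / 2"
        by (rule suminf_divide) (rule summable_geometric, simp)
      also have "(\<Sum>n. (1/2::real)^n) = 2" using suminf_geometric[of "1/2::real"] by simp
      finally show ?thesis by simp
    qed
    finally show ?thesis using e s by (subst suminf_ennreal2) auto
  qed
  finally show "hc W d (\<Union>n. A n) \<le> (\<Sum>n. hc W d (A n)) + ennreal e" .
qed

lemma hm_countable_subadd: "hm W (\<Union>n. A n) \<le> (\<Sum>n. hm W (A n))"
  unfolding hm_def[of W "\<Union>n. A n"]
proof (rule SUP_least)
  fix d :: real assume "d \<in> {0<..}"
  hence "hc W d (\<Union>n. A n) \<le> (\<Sum>n. hc W d (A n))" by (rule hc_countable_subadd[rotated 0] | simp add: hc_countable_subadd)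
  also have "\<dots> \<le> (\<Sum>n. hm W (A n))"
    using \<open>d \<in> {0<..}\<close> by (intro suminf_le) (auto intro: hc_le_hm simp: summableI)
  finally show "hc W d (\<Union>n. A n) \<le> (\<Sum>n. hm W (A n))" .
qed

lemma hm_subadd: "hm W (A \<union> B) \<le> hm W A + hm W B"
proof -
  define F where "F n = (if n = 0 then A else if n = 1 then B else {})" for n :: nat
  have "A \<union> B = (\<Union>n. F n)" unfolding F_def by (auto split: if_splits)
  hence "hm W (A \<union> B) \<le> (\<Sum>n. hm W (F n))" using hm_countable_subadd by metis
  also have "\<dots> = sum (\<lambda>n. hm W (F n)) {0,1}"
    by (rule suminf_finite) (auto simp: F_def hm_empty)
  finally show ?thesis by (simp add: F_def)
qed

lemma hc_sep:
  assumes d: "0 < d" "d \<le> s / 2" and sep: "\<And>a b. a \<in> A \<Longrightarrow> b \<in> B \<Longrightarrow> s \<le> dist a b"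
  shows "hc W d A + hc W d B \<le> hc W d (A \<union> B)"
  unfolding hc_def[of W d "A \<union> B"]
proof (rule INF_greatest)
  fix Cv assume Cv: "Cv \<in> covers d (A \<union> B)"
  define CA where "CA = {xr\<in>Cv. cball (fst xr) (snd xr) \<inter> A \<noteq> {}}"
  define CB where "CB = {xr\<in>Cv. cball (fst xr) (snd xr) \<inter> B \<noteq> {}}"
  have CA: "CA \<in> covers d A" using Cv unfolding covers_def CA_def
    by (auto intro: countable_subset) (use subset_eq in fastforce)
  have CB: "CB \<in> covers d B" using Cv unfolding covers_def CB_def
    by (auto intro: countable_subset) (use subset_eq in fastforce)
  have disj: "CA \<inter> CB = {}"
  proof (rule ccontr)
    assume "CA \<inter> CB \<noteq> {}"
    then obtain xr where "xr \<in> CA \<inter> CB" by blast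
    moreover obtain x r where "xr = (x,r)" by (cases xr)
    ultimately have xr: "(x,r) \<in> Cv" "cball x r \<inter> A \<noteq> {}" "cball x r \<inter> B \<noteq> {}"
      unfolding CA_def CB_def by auto
    from xr(2) obtain a where a: "a \<in> A" "dist x a \<le> r" by auto
    from xr(3) obtain b where b: "b \<in> B" "dist x b \<le> r" by auto
    have ab: "a \<in> A" "b \<in> B" "dist x a \<le> r" "dist x b \<le> r" using a b by auto
    have "r < d" using xr(1) Cv unfolding covers_def by auto
    have "dist a b \<le> dist x a + dist x b" by (metis dist_commute dist_triangle)
    also have "\<dots> < s" using ab \<open>r < d\<close> d by linarith
    finally show False using sep[OF ab(1,2)] by simp
  qed
  have "hc W d A + hc W d B \<le> (\<integral>\<^sup>+xr. W xr \<partial>count_space CA) + (\<integral>\<^sup>+xr. W xr \<partial>count_space CB)"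
    unfolding hc_def by (intro add_mono INF_lower CA CB)
  also have "\<dots> = (\<integral>\<^sup>+xr. W xr \<partial>count_space (CA \<union> CB))"
    by (rule count_space_integral_Un_disj[symmetric, OF disj])
  also have "\<dots> \<le> (\<integral>\<^sup>+xr. W xr \<partial>count_space Cv)"
    by (rule count_space_integral_mono_set) (auto simp: CA_def CB_def)
  finally show "hc W d A + hc W d B \<le> (\<integral>\<^sup>+xr. W xr \<partial>count_space Cv)" .
qed

lemma hm_sep:
  assumes s: "0 < s" and sep: "\<And>a b. a \<in> A \<Longrightarrow> b \<in> B \<Longrightarrow> s \<le> dist a b"
  shows "hm W A + hm W B \<le> hm W (A \<union> B)"
proof -
  have "hm W A + hm W B = (SUP d2\<in>{0<..}. SUP d1\<in>{0<..}. hc W d1 A + hc W d2 B)"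
    unfolding hm_def
    by (simp add: ennreal_SUP_add_left[symmetric] ennreal_SUP_add_right)
  also have "\<dots> \<le> hm W (A \<union> B)"
  proof (intro SUP_least)
    fix d1 d2 :: real assume d: "d2 \<in> {0<..}" "d1 \<in> {0<..}"
    define d where "d = min (min d1 d2) (s/2)"
    have dpos: "0 < d" "d \<le> s/2" using d s by (auto simp: d_def)
    have "hc W d1 A + hc W d2 B \<le> hc W d A + hc W d B"
      by (intro add_mono hc_anti) (auto simp: d_def)
    also have "\<dots> \<le> hc W d (A \<union> B)" by (rule hc_sep[OF dpos sep])
    also have "\<dots> \<le> hm W (A \<union> B)" by (rule hc_le_hm[OF dpos(1)])
    finally show "hc W d1 A + hc W d2 B \<le> hm W (A \<union> B)" .
  qed
  finally show ?thesis .
qed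

lemma hm_sep_dist:
  assumes s: "0 < s" and sep: "\<And>a b. a \<in> A \<Longrightarrow> b \<in> B \<Longrightarrow> s \<le> dist a b" and sub: "A \<union> B \<subseteq> T"
  shows "hm W A + hm W B \<le> hm W T"
  using hm_sep[OF s sep] hm_mono[OF sub] by (rule order_trans)

lemma qq_aux: "0 < q \<Longrightarrow> 1/(q+1) < 1/(q::real)"
  by (rule divide_strict_left_mono) auto

lemma hm_closed_split:
  fixes F :: "'a::metric_space set"
  assumes F: "closed F"
  shows "hm W (T \<inter> F) + hm W (T - F) \<le> hm W T"
proof (cases "F = {}")
  case True thus ?thesis by (simp add: hm_empty)
next
  case Fne: False
  define \<delta> where "\<delta> x = infdist x F" for x
  define A where "A = T - F"
  define An where "An n = {x\<in>A. 1/(real n+1) < \<delta> x}" for n :: nat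
  define R where "R k = {x\<in>A. 1/(real k+2) < \<delta> x \<and> \<delta> x \<le> 1/(real k+1)}" for k :: nat
  have dpos: "0 < \<delta> x" if "x \<in> A" for x
    using that F Fne in_closed_iff_infdist_zero[of F x] infdist_nonneg[of x F]
    by (auto simp: A_def \<delta>_def)
  have dtri: "\<delta> u - \<delta> v \<le> dist u v" for u v
    using infdist_triangle[of u F v] by (simp add: \<delta>_def)
  show ?thesis
  proof (rule ennreal_le_epsilon)
    fix e :: real assume Tfin: "hm W T < top" and e: "0 < e"
    have i: "hm W (T \<inter> F) + hm W (An n) \<le> hm W T" for n
    proof (rule hm_sep_dist)
      show "0 < 1/(real n+1)" by simp
      fix a b assume ab: "a \<in> T \<inter> F" "b \<in> An n"
      have "infdist b F \<le> dist b a" using ab by (intro infdist_le) auto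
      thus "1/(real n+1) \<le> dist a b" using ab by (auto simp: An_def \<delta>_def dist_commute)
    qed (auto simp: An_def A_def)
    have ii: "(\<Sum>k<m. hm W (R (2*k+p))) \<le> hm W (\<Union>k<m. R (2*k+p))" for m p
    proof (induction m)
      case 0 thus ?case by simp
    next
      case (Suc m)
      have "(\<Sum>k<Suc m. hm W (R (2*k+p))) = (\<Sum>k<m. hm W (R (2*k+p))) + hm W (R (2*m+p))" by simp
      also have "\<dots> \<le> hm W (\<Union>k<m. R (2*k+p)) + hm W (R (2*m+p))" using Suc by (rule add_right_mono)
      also have "\<dots> \<le> hm W (\<Union>k<Suc m. R (2*k+p))"
      proof (rule hm_sep_dist)
        define s where "s = 1/(real (2*m+p)) - 1/(real (2*m+p)+1)"
        have mp: "0 < real (2*m+p)" if "m > 0" using that by simp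
        show "0 < (if m = 0 then 1 else s)"
        proof (cases "m = 0")
          case False
          then show ?thesis using qq_aux[OF mp] by (simp add: s_def)
        qed simp
        fix a b assume a: "a \<in> (\<Union>k<m. R (2*k+p))" and b: "b \<in> R (2*m+p)"
        then obtain k where k: "k < m" "a \<in> R (2*k+p)" by auto
        have m0: "m > 0" using k by simp
        have "1/(real (2*m+p)) \<le> 1/(real (2*k+p)+2)"
          using k(1) by (intro divide_left_mono) auto
        hence da: "1/(real (2*m+p)) < \<delta> a" using k(2) by (auto simp: R_def)
        have db: "\<delta> b \<le> 1/(real (2*m+p)+1)" using b by (auto simp: R_def)
        show "(if m = 0 then 1 else s) \<le> dist a b"
          using da db dtri[of a b] m0 by (simp add: s_def)
      next
        show "(\<Union>k<m. R (2*k+p)) \<union> R (2*m+p) \<subseteq> (\<Union>k<Suc m. R (2*k+p))" by (auto simp: lessThan_Suc)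
      qed
      finally show ?case .
    qed
    have RT: "R k \<subseteq> T" for k by (auto simp: R_def A_def)
    have ii': "(\<Sum>k<m. hm W (R (2*k+p))) \<le> hm W T" for m p
    proof -
      have "(\<Union>k<m. R (2*k+p)) \<subseteq> T" using RT by blast
      then show ?thesis by (rule order_trans[OF ii hm_mono])
    qed
    have evod: "(\<Sum>k<2*m. f k) = (\<Sum>k<m. f (2*k+0)) + (\<Sum>k<m. f (2*k+1))" for m and f :: "nat \<Rightarrow> ennreal"
      by (induction m) (auto simp: algebra_simps)
    have sumR: "(\<Sum>k. hm W (R k)) \<le> 2 * hm W T"
      unfolding suminf_eq_SUP
    proof (rule SUP_least)
      fix n
      have "(\<Sum>k<n. hm W (R k)) \<le> (\<Sum>k<2*n. hm W (R k))"
        by (rule sum_mono2) auto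
      also have "\<dots> \<le> hm W T + hm W T" unfolding evod by (intro add_mono ii')
      finally show "(\<Sum>k<n. hm W (R k)) \<le> 2 * hm W T" by (simp add: mult_2)
    qed
    have sumfin: "(\<Sum>k. hm W (R k)) < top"
      using sumR Tfin by (metis ennreal_mult_less_top ennreal_numeral_less_top le_less_trans)
    have Rfin: "hm W (R k) < top" for k
      using ennreal_term_le_suminf[of "\<lambda>k. hm W (R k)" k] sumfin by (simp add: le_less_trans)
    define a where "a k = enn2real (hm W (R k))" for k
    have aeq: "hm W (R k) = ennreal (a k)" for k using Rfin[of k] by (simp add: a_def)
    have asum: "summable a"
    proof (rule summable_suminf_not_top)
      show "0 \<le> a i" for i by (simp add: a_def)
      show "(\<Sum>i. ennreal (a i)) \<noteq> top" using sumfin by (simp add: aeq[symmetric])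
    qed
    obtain n0 where n0: "\<And>n. n \<ge> n0 \<Longrightarrow> norm (\<Sum>k. a (k + n)) < e"
      using suminf_exist_split[OF e asum] by blast
    have tail: "(\<Sum>k. hm W (R (k + n0))) \<le> ennreal e"
    proof -
      have s2: "summable (\<lambda>k. a (k + n0))" using asum by (rule summable_ignore_initial_segment)
      have "(\<Sum>k. hm W (R (k + n0))) = ennreal (\<Sum>k. a (k + n0))"
        unfolding aeq by (rule suminf_ennreal2[OF _ s2]) (simp add: a_def)
      also have "\<dots> \<le> ennreal e" using n0[of n0] by (intro ennreal_leI) auto
      finally show ?thesis .
    qed
    have cov: "A \<subseteq> An n0 \<union> (\<Union>k. R (k + n0))"
    proof
      fix x assume x: "x \<in> A"
      show "x \<in> An n0 \<union> (\<Union>k. R (k + n0))"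
      proof (cases "1/(real n0+1) < \<delta> x")
        case True thus ?thesis using x by (auto simp: An_def)
      next
        case False
        define t where "t = 1 / \<delta> x"
        have dp: "0 < \<delta> x" using dpos[OF x] .
        have tge: "real n0 + 1 \<le> t" using False dp by (simp add: t_def field_simps)
        define j where "j = nat \<lfloor>t\<rfloor>"
        have j1: "real j \<le> t" "t < real j + 1" using tge by (auto simp: j_def)
        have j2: "n0 + 1 \<le> j" using tge unfolding j_def by linarith
        define k where "k = j - 1 - n0"
        have kj: "real k + real n0 + 1 = real j" using j2 by (simp add: k_def)
        have e1: "real (k+n0)+2 = real j + 1" using kj by simp
        have "1/(real j+1) < \<delta> x"
          using j1 dp by (simp add: t_def field_simps)
        hence "1/(real (k+n0)+2) < \<delta> x" by (simp only: e1)
        moreover have "\<delta> x \<le> 1/(real (k+n0)+1)"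
          using j1 kj dp j2 by (simp add: t_def field_simps)
        ultimately have "x \<in> R (k + n0)" using x by (simp add: R_def)
        thus ?thesis by blast
      qed
    qed
    have "hm W A \<le> hm W (An n0 \<union> (\<Union>k. R (k + n0)))" by (rule hm_mono[OF cov])
    also have "\<dots> \<le> hm W (An n0) + hm W (\<Union>k. R (k + n0))" by (rule hm_subadd)
    also have "\<dots> \<le> hm W (An n0) + ennreal e"
      using hm_countable_subadd[of W "\<lambda>k. R (k + n0)"] tail by (intro add_left_mono) auto
    finally have "hm W (T \<inter> F) + hm W A \<le> hm W (T \<inter> F) + (hm W (An n0) + ennreal e)"
      by (rule add_left_mono)
    also have "\<dots> \<le> hm W T + ennreal e" using i[of n0] by (simp add: add.assoc[symmetric] add_right_mono)
    finally show "hm W (T \<inter> F) + hm W (T - F) \<le> hm W T + ennreal e" by (simp add: A_def)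
  qed
qed

lemma hm_outer: "outer_measure_space (Pow UNIV) (hm W)"
  unfolding outer_measure_space_def positive_def increasing_def countably_subadditive_def
  by (auto simp: hm_empty hm_mono hm_countable_subadd)

lemma hm_closed_lambda:
  assumes F: "closed F"
  shows "F \<in> lambda_system UNIV (Pow UNIV) (hm W)"
  unfolding lambda_system_def
proof (safe)
  fix x :: "'a set"
  have "hm W (F \<inter> x) + hm W ((UNIV - F) \<inter> x) = hm W (x \<inter> F) + hm W (x - F)"
    by (simp add: Int_commute Diff_eq)
  also have "\<dots> = hm W x"
  proof (rule antisym)
    show "hm W (x \<inter> F) + hm W (x - F) \<le> hm W x" by (rule hm_closed_split[OF F])
    have "(x \<inter> F) \<union> (x - F) = x" by blast
    hence "hm W x = hm W ((x \<inter> F) \<union> (x - F))" by simp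
    also have "\<dots> \<le> hm W (x \<inter> F) + hm W (x - F)" by (rule hm_subadd)
    finally show "hm W x \<le> hm W (x \<inter> F) + hm W (x - F)" .
  qed
  finally show "hm W (F \<inter> x) + hm W ((UNIV - F) \<inter> x) = hm W x" .
qed auto

lemma hm_borel_ca:
  fixes S :: "'a::metric_space set"
  assumes S: "closed S"
  shows "positive (sets borel) (\<lambda>A. hm W (A \<inter> S))" "countably_additive (sets borel) (\<lambda>A. hm W (A \<inter> S))"
proof -
  define L where "L = lambda_system UNIV (Pow (UNIV::'a set)) (hm W)"
  interpret P: sigma_algebra "UNIV::'a set" "Pow UNIV" by (rule sigma_algebra_Pow)
  have ms: "measure_space UNIV L (hm W)" unfolding L_def by (rule P.caratheodory_lemma[OF hm_outer])
  then have sa: "sigma_algebra UNIV L" and ca: "countably_additive L (hm W)"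
    by (auto simp: measure_space_def)
  interpret L: sigma_algebra UNIV L by (rule sa)
  have cl: "F \<in> L" if "closed F" for F using hm_closed_lambda[OF that] by (simp add: L_def)
  have op: "G \<in> L" if "open G" for G
  proof -
    have "UNIV - G \<in> L" by (rule cl) (rule closed_Diff, simp, rule that)
    from L.compl_sets[OF this] have "UNIV - (UNIV - G) \<in> L" .
    moreover have "UNIV - (UNIV - G) = G" by blast
    ultimately show ?thesis by simp
  qed
  have bL: "sets borel \<subseteq> L"
    unfolding sets_borel by (rule sigma_algebra.sigma_sets_subset[OF sa]) (auto intro: op)
  have SL: "S \<in> L" by (rule cl[OF S])
  show "positive (sets borel) (\<lambda>A. hm W (A \<inter> S))" by (simp add: positive_def hm_empty)
  show "countably_additive (sets borel) (\<lambda>A. hm W (A \<inter> S))"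
    unfolding countably_additive_def
  proof (intro allI impI)
    fix A :: "nat \<Rightarrow> 'a set"
    assume A: "range A \<subseteq> sets borel" "disjoint_family A" "(\<Union>i. A i) \<in> sets borel"
    have AL: "range (\<lambda>i. A i \<inter> S) \<subseteq> L"
      using A(1) bL SL L.Int by (auto simp: subset_eq)
    have dj: "disjoint_family (\<lambda>i. A i \<inter> S)" using A(2) by (auto simp: disjoint_family_on_def)
    have UL: "(\<Union>i. A i \<inter> S) \<in> L"
      using sigma_algebra.countable_UN[OF sa AL] by simp
    have "(\<Sum>i. hm W (A i \<inter> S)) = hm W (\<Union>i. A i \<inter> S)"
      using ca AL dj UL unfolding countably_additive_def by blast
    thus "(\<Sum>i. hm W (A i \<inter> S)) = hm W ((\<Union>i. A i) \<inter> S)" by simp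
  qed
qed

definition Wt :: "'a::metric_space measure \<Rightarrow> real \<Rightarrow> 'a \<times> real \<Rightarrow> ennreal" where
  "Wt mu th xr = emeasure mu (cball (fst xr) (snd xr)) * ennreal (snd xr powr (-th))"

lemma hmeasure_eq: "hmeasure mu th = hm (Wt mu th)"
  unfolding hmeasure_def hm_def hcont_delta_def hc_def covers_def Wt_def
  by (intro ext) simp

lemma sets_hrestr[simp]: "sets (hrestr mu th S) = sets borel"
  unfolding hrestr_def by (simp add: sets_measure_of_conv) (metis sets.sigma_sets_eq space_borel)

lemma sets_mk[simp]: "sets (mk mu th ths S N k) = sets borel"
  unfolding mk_def by (simp add: sets_measure_of_conv) (metis sets.sigma_sets_eq space_borel)

lemma sa_borel: "sigma_algebra UNIV (sets borel)"
  using sets.sigma_algebra_axioms[of borel] by simp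

lemma emeasure_hrestr:
  assumes S: "closed S" and A: "A \<in> sets borel"
  shows "emeasure (hrestr mu th S) A = hmeasure mu th (A \<inter> S)"
  unfolding hrestr_def hmeasure_eq
  by (rule emeasure_measure_of_sigma[OF sa_borel hm_borel_ca[OF S] A])

lemma emeasure_mk:
  assumes S: "\<And>i. i \<in> {1..N} \<Longrightarrow> closed (S i)" and A: "A \<in> sets borel"
  shows "emeasure (mk mu th ths S N k) A =
    (\<Sum>i\<in>{1..N}. ennreal (2 powr (real k * (th - ths i))) * hmeasure mu (ths i) (A \<inter> S i))"
  unfolding mk_def
proof (rule emeasure_measure_of_sigma[OF sa_borel _ _ A])
  show "positive (sets borel) (\<lambda>A. \<Sum>i\<in>{1..N}. ennreal (2 powr (real k * (th - ths i))) * hmeasure mu (ths i) (A \<inter> S i))"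
    by (simp add: positive_def hmeasure_eq hm_empty)
  show "countably_additive (sets borel) (\<lambda>A. \<Sum>i\<in>{1..N}. ennreal (2 powr (real k * (th - ths i))) * hmeasure mu (ths i) (A \<inter> S i))"
    unfolding countably_additive_def
  proof (intro allI impI)
    fix A :: "nat \<Rightarrow> 'a set"
    assume A: "range A \<subseteq> sets borel" "disjoint_family A" "(\<Union>i. A i) \<in> sets borel"
    have each: "(\<Sum>n. hmeasure mu (ths i) (A n \<inter> S i)) = hmeasure mu (ths i) ((\<Union>n. A n) \<inter> S i)"
      if "i \<in> {1..N}" for i
      using hm_borel_ca(2)[OF S[OF that], of "Wt mu (ths i)"] A unfolding countably_additive_def hmeasure_eq
      by blast
    have "(\<Sum>n. \<Sum>i\<in>{1..N}. ennreal (2 powr (real k * (th - ths i))) * hmeasure mu (ths i) (A n \<inter> S i))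
        = (\<Sum>i\<in>{1..N}. \<Sum>n. ennreal (2 powr (real k * (th - ths i))) * hmeasure mu (ths i) (A n \<inter> S i))"
      by (rule suminf_sum) (simp add: summableI)
    also have "\<dots> = (\<Sum>i\<in>{1..N}. ennreal (2 powr (real k * (th - ths i))) * hmeasure mu (ths i) ((\<Union>n. A n) \<inter> S i))"
      by (rule sum.cong) (auto simp: each)
    finally show "(\<Sum>n. \<Sum>i\<in>{1..N}. ennreal (2 powr (real k * (th - ths i))) * hmeasure mu (ths i) (A n \<inter> S i))
        = (\<Sum>i\<in>{1..N}. ennreal (2 powr (real k * (th - ths i))) * hmeasure mu (ths i) ((\<Union>n. A n) \<inter> S i))" .
  qed
qed

lemma nn_integral_sum_meas:
  assumes fin: "finite I" and sets: "\<And>i. i \<in> I \<Longrightarrow> sets (M i) = sets N"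
    and em: "\<And>A. A \<in> sets N \<Longrightarrow> emeasure N A = (\<Sum>i\<in>I. emeasure (M i) A)"
    and g: "g \<in> borel_measurable N"
  shows "integral\<^sup>N N g = (\<Sum>i\<in>I. integral\<^sup>N (M i) g)"
proof -
  have meq: "(borel_measurable (M i) :: (_ \<Rightarrow> ennreal) set) = borel_measurable N" if "i \<in> I" for i
    by (rule measurable_cong_sets) (auto simp: sets[OF that])
  show ?thesis
  using g
proof (induction rule: borel_measurable_induct)
  case (cong f g)
  have sp: "space (M i) = space N" if "i \<in> I" for i using sets[OF that] by (rule sets_eq_imp_space_eq)
  have "integral\<^sup>N N f = integral\<^sup>N N g" using cong by (intro nn_integral_cong) auto
  moreover have "integral\<^sup>N (M i) f = integral\<^sup>N (M i) g" if "i \<in> I" for i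
    using cong sp[OF that] by (intro nn_integral_cong) auto
  ultimately show ?case using cong by simp
next
  case (set A)
  then show ?case using sets by (simp add: em)
next
  case (mult u c)
  have mi: "u \<in> borel_measurable (M i)" if "i \<in> I" for i
    using mult(2) meq[OF that] by simp
  show ?case using mult mi by (simp add: nn_integral_cmult sum_distrib_left)
next
  case (add u v)
  have mi: "u \<in> borel_measurable (M i)" "v \<in> borel_measurable (M i)" if "i \<in> I" for i
    using meq[OF that] add by blast+
  show ?case using add mi by (simp add: nn_integral_add sum.distrib)
next
  case (seq U)
  have mi: "U j \<in> borel_measurable (M i)" if "i \<in> I" for i j
    using seq(1)[of j] meq[OF that] by simp
  have "integral\<^sup>N N (SUP j. U j) = (SUP j. integral\<^sup>N N (U j))"
    unfolding SUP_apply[abs_def] by (rule nn_integral_monotone_convergence_SUP) (use seq in auto)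
  also have "\<dots> = (SUP j. \<Sum>i\<in>I. integral\<^sup>N (M i) (U j))" using seq by simp
  also have "\<dots> = (\<Sum>i\<in>I. SUP j. integral\<^sup>N (M i) (U j))"
  proof (rule ennreal_SUP_sum)
    fix i assume "i \<in> I"
    show "incseq (\<lambda>j. integral\<^sup>N (M i) (U j))"
      using \<open>incseq U\<close> by (auto simp: incseq_def le_fun_def intro!: nn_integral_mono)
  qed
  also have "\<dots> = (\<Sum>i\<in>I. integral\<^sup>N (M i) (SUP j. U j))"
  proof (rule sum.cong)
    fix i assume i: "i \<in> I"
    show "(SUP j. integral\<^sup>N (M i) (U j)) = integral\<^sup>N (M i) (SUP j. U j)"
      unfolding SUP_apply[abs_def] by (rule nn_integral_monotone_convergence_SUP[symmetric]) (use seq mi[OF i] in auto)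
  qed simp
  finally show ?case .
qed
qed

lemma ratio_le:
  fixes a b :: "nat \<Rightarrow> ennreal" and w :: "nat \<Rightarrow> real"
  assumes fin: "finite I" and w: "\<And>i. i \<in> I \<Longrightarrow> 0 < w i"
    and b: "\<And>i. i \<in> I \<Longrightarrow> 0 < b i \<and> b i < top"
    and M: "0 < (\<Sum>i\<in>I. ennreal (w i) * b i)"
  shows "(\<Sum>i\<in>I. ennreal (w i) * a i) / (\<Sum>i\<in>I. ennreal (w i) * b i) \<le> (\<Sum>i\<in>I. a i / b i)"
proof (rule divide_le_posI_ennreal[OF M])
  let ?M = "\<Sum>i\<in>I. ennreal (w i) * b i"
  have "(\<Sum>i\<in>I. ennreal (w i) * a i) \<le> (\<Sum>i\<in>I. ?M * (a i / b i))"
  proof (rule sum_mono)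
    fix i assume i: "i \<in> I"
    have e0: "b i * (a i / b i) = (a i * b i) / b i" by (simp add: ennreal_times_divide mult.commute)
    also have "\<dots> = a i" by (rule mult_divide_eq_ennreal) (use b[OF i] in auto)
    finally have "ennreal (w i) * a i = ennreal (w i) * (b i * (a i / b i))" by simp
    also have "\<dots> = (ennreal (w i) * b i) * (a i / b i)" by (simp add: mult.assoc)
    also have "\<dots> \<le> ?M * (a i / b i)"
      by (intro mult_right_mono member_le_sum[OF i]) (auto simp: fin)
    finally show "ennreal (w i) * a i \<le> ?M * (a i / b i)" .
  qed
  also have "\<dots> = ?M * (\<Sum>i\<in>I. a i / b i)" by (simp add: sum_distrib_left)
  finally show "(\<Sum>i\<in>I. ennreal (w i) * a i) \<le> ?M * (\<Sum>i\<in>I. a i / b i)" .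
qed

lemma core:
  fixes nu :: "nat \<Rightarrow> 'a::metric_space measure" and m :: "'a measure" and w :: "nat \<Rightarrow> real"
    and f :: "'a \<Rightarrow> real"
  assumes sets_nu: "\<And>i. sets (nu i) = sets borel"
    and sets_m: "sets m = sets borel"
    and w: "\<And>i. i \<in> {1..N} \<Longrightarrow> 0 < w i"
    and em: "\<And>A. A \<in> sets borel \<Longrightarrow> emeasure m A = (\<Sum>i\<in>{1..N}. ennreal (w i) * emeasure (nu i) A)"
    and B: "B \<in> sets borel"
    and I: "I \<subseteq> {1..N}"
    and pos: "\<And>i. i \<in> I \<Longrightarrow> 0 < emeasure (nu i) B"
    and zero: "\<And>j. j \<in> {1..N} - I \<Longrightarrow> emeasure (nu j) B = 0"
    and f: "f \<in> borel_measurable borel"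
    and N1: "1 \<le> N"
  shows "Osc m f B \<le> ennreal (real N) * ((\<Sum>i\<in>I. Osc (nu i) f B)
     + (\<Sum>i\<in>I. \<Sum>j\<in>I - {i}. Av (nu i) B (\<lambda>y. Av (nu j) B (\<lambda>z. ennreal \<bar>f y - f z\<bar>))))"
proof -
  define b where "b i = emeasure (nu i) B" for i
  have finI: "finite I" using I finite_subset by blast
  have meq: "(borel_measurable (nu i) :: (_ \<Rightarrow> ennreal) set) = borel_measurable borel" for i
    by (rule measurable_cong_sets) (auto simp: sets_nu)
  have meqm: "(borel_measurable m :: (_ \<Rightarrow> ennreal) set) = borel_measurable borel"
    by (rule measurable_cong_sets) (auto simp: sets_m)
  have Bnu: "B \<in> sets (nu i)" for i using B sets_nu by simp
  have intm: "(\<integral>\<^sup>+x. g x * indicator B x \<partial>m) = (\<Sum>i\<in>I. ennreal (w i) * (\<integral>\<^sup>+x. g x * indicator B x \<partial>nu i))"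
    if g: "g \<in> borel_measurable borel" for g
  proof -
    have gB: "(\<lambda>x. g x * indicator B x) \<in> borel_measurable borel" using g B by measurable
    have "(\<integral>\<^sup>+x. g x * indicator B x \<partial>m) = (\<Sum>i\<in>{1..N}. \<integral>\<^sup>+x. g x * indicator B x \<partial>scale_measure (ennreal (w i)) (nu i))"
      by (rule nn_integral_sum_meas) (use gB sets_nu sets_m em meqm in auto)
    also have "\<dots> = (\<Sum>i\<in>{1..N}. ennreal (w i) * (\<integral>\<^sup>+x. g x * indicator B x \<partial>nu i))"
      by (rule sum.cong) (use gB meq in \<open>auto simp: nn_integral_scale_measure\<close>)
    also have "\<dots> = (\<Sum>i\<in>I. ennreal (w i) * (\<integral>\<^sup>+x. g x * indicator B x \<partial>nu i))"
    proof (rule sum.mono_neutral_right[OF _ I])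
      show "\<forall>i\<in>{1..N} - I. ennreal (w i) * (\<integral>\<^sup>+x. g x * indicator B x \<partial>nu i) = 0"
      proof
        fix i assume i: "i \<in> {1..N} - I"
        have "B \<in> null_sets (nu i)" using zero[OF i] Bnu by (simp add: null_sets_def)
        thus "ennreal (w i) * (\<integral>\<^sup>+x. g x * indicator B x \<partial>nu i) = 0" by (simp add: nn_integral_null_set)
      qed
    qed simp
    finally show ?thesis .
  qed
  have mB: "emeasure m B = (\<Sum>i\<in>I. ennreal (w i) * b i)"
  proof -
    have "emeasure m B = (\<Sum>i\<in>{1..N}. ennreal (w i) * b i)" using em[OF B] by (simp add: b_def)
    also have "\<dots> = (\<Sum>i\<in>I. ennreal (w i) * b i)"
      by (rule sum.mono_neutral_right[OF _ I]) (auto simp: b_def zero)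
    finally show ?thesis .
  qed
  define D where "D i j = Av (nu i) B (\<lambda>y. Av (nu j) B (\<lambda>z. ennreal \<bar>f y - f z\<bar>))" for i j
  define RHS where "RHS = ennreal (real N) * ((\<Sum>i\<in>I. Osc (nu i) f B) + (\<Sum>i\<in>I. \<Sum>j\<in>I - {i}. D i j))"
  have Osc_le_Av: "Osc m f B \<le> Av m B (\<lambda>x. ennreal \<bar>f x - c\<bar>)" for c
    unfolding Osc_def by (rule INF_lower) simp
  show ?thesis
  proof (cases "I = {} \<or> (\<exists>i\<in>I. b i = top)")
    case True
    have "Av m B (\<lambda>x. ennreal \<bar>f x - 0\<bar>) = 0"
    proof (cases "I = {}")
      case True then show ?thesis by (simp add: Av_def mB)
    next
      case False
      then obtain i where i: "i \<in> I" "b i = top" using True by auto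
      have "0 < w i" using w I i(1) by auto
      then have "top = ennreal (w i) * b i" using i by (simp add: ennreal_mult_top)
      also have "\<dots> \<le> (\<Sum>i\<in>I. ennreal (w i) * b i)" by (rule member_le_sum[OF i(1)]) (auto simp: finI)
      finally have "emeasure m B = top" by (simp add: mB top_unique)
      then show ?thesis by (simp add: Av_def)
    qed
    then have "Osc m f B \<le> 0" using Osc_le_Av[of 0] by simp
    then show ?thesis by (simp add: D_def)
  next
    case False
    then have Ine: "I \<noteq> {}" and bfin: "\<And>i. i \<in> I \<Longrightarrow> b i < top" by (auto simp: top.not_eq_extremum)
    have bpos: "\<And>i. i \<in> I \<Longrightarrow> 0 < b i" using pos by (simp add: b_def)
    obtain i0 where i0: "i0 \<in> I" using Ine by blast
    have AvI: "Av (nu i) B g = (\<integral>\<^sup>+x. g x * indicator B x \<partial>nu i) / b i" if "i \<in> I" for i g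
      using bpos[OF that] by (simp add: Av_def b_def)
    have Mpos: "0 < (\<Sum>i\<in>I. ennreal (w i) * b i)"
    proof -
      have "0 < ennreal (w i0) * b i0" using w[of i0] I i0 bpos[OF i0] by (auto simp: ennreal_zero_less_mult_iff)
      also have "\<dots> \<le> (\<Sum>i\<in>I. ennreal (w i) * b i)" by (rule member_le_sum[OF i0]) (auto simp: finI)
      finally show ?thesis .
    qed
    define G where "G y = Av (nu i0) B (\<lambda>z. ennreal \<bar>f y - f z\<bar>)" for y
    define K where "K c = Av (nu i0) B (\<lambda>z. ennreal \<bar>f z - c\<bar>)" for c
    have Gm: "G \<in> borel_measurable borel"
    proof -
      define nu' where "nu' = density (nu i0) (indicator B)"
      have sets': "sets nu' = sets borel" by (simp add: nu'_def sets_nu)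
      have "emeasure nu' (space nu') = b i0"
        unfolding nu'_def using Bnu[of i0] by (simp add: emeasure_density b_def nn_integral_indicator)
      then interpret F: finite_measure nu' using bfin[OF i0] by (intro finite_measureI) simp
      have fm': "f \<in> borel_measurable nu'" using f measurable_cong_sets[OF sets' refl[of "sets (borel :: real measure)"]] by simp
      have h: "(\<lambda>p. ennreal \<bar>f (fst p) - f (snd p)\<bar>) \<in> borel_measurable (borel \<Otimes>\<^sub>M nu')"
        using f fm' by measurable
      have hm: "(\<lambda>y. \<integral>\<^sup>+z. ennreal \<bar>f y - f z\<bar> \<partial>nu') \<in> borel_measurable borel"
        using F.borel_measurable_nn_integral[of "\<lambda>y z. ennreal \<bar>f y - f z\<bar>" borel] h
        by (simp add: case_prod_beta')
      have "(\<integral>\<^sup>+z. ennreal \<bar>f y - f z\<bar> \<partial>nu') = (\<integral>\<^sup>+z. ennreal \<bar>f y - f z\<bar> * indicator B z \<partial>nu i0)" for y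
      proof -
        have "(\<lambda>z. ennreal \<bar>f y - f z\<bar>) \<in> borel_measurable (nu i0)" using f meq by simp
        then show ?thesis unfolding nu'_def using Bnu[of i0]
          by (subst nn_integral_density) (auto simp: mult.commute)
      qed
      then have "G y = (\<integral>\<^sup>+z. ennreal \<bar>f y - f z\<bar> \<partial>nu') / b i0" for y
        by (simp add: G_def AvI[OF i0])
      then have "G = (\<lambda>y. (\<integral>\<^sup>+z. ennreal \<bar>f y - f z\<bar> \<partial>nu') * inverse (b i0))"
        by (simp add: divide_ennreal_def fun_eq_iff)
      then show ?thesis using hm by simp
    qed
    have tri: "ennreal \<bar>f y - c\<bar> \<le> G y + K c" for y c
    proof -
      have fz1: "(\<lambda>z. ennreal \<bar>f y - f z\<bar> * indicator B z) \<in> borel_measurable borel"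
        using f B by measurable
      have fz2: "(\<lambda>z. ennreal \<bar>f z - c\<bar> * indicator B z) \<in> borel_measurable borel"
        using f B by measurable
      have fz: "(\<lambda>z. ennreal \<bar>f y - f z\<bar> * indicator B z) \<in> borel_measurable (nu i0)"
        "(\<lambda>z. ennreal \<bar>f z - c\<bar> * indicator B z) \<in> borel_measurable (nu i0)"
        using fz1 fz2 meq by simp_all
      have "ennreal \<bar>f y - c\<bar> = (\<integral>\<^sup>+z. ennreal \<bar>f y - c\<bar> * indicator B z \<partial>nu i0) / b i0"
        using bpos[OF i0] bfin[OF i0] Bnu[of i0]
        by (simp add: nn_integral_cmult_indicator b_def mult_divide_eq_ennreal)
      also have "\<dots> \<le> (\<integral>\<^sup>+z. ennreal \<bar>f y - f z\<bar> * indicator B z + ennreal \<bar>f z - c\<bar> * indicator B z \<partial>nu i0) / b i0"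
      proof (intro divide_right_mono_ennreal nn_integral_mono)
        fix z
        have "ennreal \<bar>f y - c\<bar> \<le> ennreal (\<bar>f y - f z\<bar> + \<bar>f z - c\<bar>)" by (intro ennreal_leI) linarith
        also have "\<dots> = ennreal \<bar>f y - f z\<bar> + ennreal \<bar>f z - c\<bar>" by (simp add: ennreal_plus)
        finally show "ennreal \<bar>f y - c\<bar> * indicator B z \<le> ennreal \<bar>f y - f z\<bar> * indicator B z + ennreal \<bar>f z - c\<bar> * indicator B z"
          by (auto simp: indicator_def)
      qed
      also have "\<dots> = G y + K c"
        by (simp add: nn_integral_add[OF fz] add_divide_distrib_ennreal G_def K_def AvI[OF i0])
      finally show ?thesis .
    qed
    have step3: "Av (nu i) B (\<lambda>y. ennreal \<bar>f y - c\<bar>) \<le> D i i0 + K c" if i: "i \<in> I" for i c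
    proof -
      have Gi0: "(\<lambda>y. G y * indicator B y) \<in> borel_measurable borel" using Gm B by measurable
      have Gi: "(\<lambda>y. G y * indicator B y) \<in> borel_measurable (nu i)" using Gi0 meq by simp
      have "Av (nu i) B (\<lambda>y. ennreal \<bar>f y - c\<bar>) = (\<integral>\<^sup>+y. ennreal \<bar>f y - c\<bar> * indicator B y \<partial>nu i) / b i"
        by (rule AvI[OF i])
      also have "\<dots> \<le> (\<integral>\<^sup>+y. G y * indicator B y + K c * indicator B y \<partial>nu i) / b i"
        by (intro divide_right_mono_ennreal nn_integral_mono)
           (use tri in \<open>auto simp: indicator_def distrib_right[symmetric]\<close>)
      also have "\<dots> = (\<integral>\<^sup>+y. G y * indicator B y \<partial>nu i) / b i + K c * b i / b i"
        using Bnu[of i]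
        by (simp add: nn_integral_add[OF Gi] nn_integral_cmult_indicator add_divide_distrib_ennreal b_def)
      also have "\<dots> = D i i0 + K c"
        using bpos[OF i] bfin[OF i] by (simp add: mult_divide_eq_ennreal D_def AvI[OF i] G_def)
      finally show ?thesis .
    qed
    define Dsum where "Dsum = (\<Sum>i\<in>I - {i0}. D i i0)"
    have cardI: "card I \<le> N" using card_mono[OF _ I] by simp
    have each_c: "Osc m f B \<le> ennreal (real N) * K c + Dsum" for c
    proof -
      have gm: "(\<lambda>x. ennreal \<bar>f x - c\<bar>) \<in> borel_measurable borel" using f by measurable
      have "Osc m f B \<le> Av m B (\<lambda>x. ennreal \<bar>f x - c\<bar>)" by (rule Osc_le_Av)
      also have "\<dots> = (\<Sum>i\<in>I. ennreal (w i) * (\<integral>\<^sup>+x. ennreal \<bar>f x - c\<bar> * indicator B x \<partial>nu i)) / (\<Sum>i\<in>I. ennreal (w i) * b i)"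
        using Mpos by (simp add: Av_def intm[OF gm] mB)
      also have "\<dots> \<le> (\<Sum>i\<in>I. (\<integral>\<^sup>+x. ennreal \<bar>f x - c\<bar> * indicator B x \<partial>nu i) / b i)"
        by (rule ratio_le[OF finI _ _ Mpos]) (use w I bpos bfin in auto)
      also have "\<dots> = (\<Sum>i\<in>I. Av (nu i) B (\<lambda>x. ennreal \<bar>f x - c\<bar>))"
        by (rule sum.cong) (auto simp: AvI)
      also have "\<dots> = K c + (\<Sum>i\<in>I - {i0}. Av (nu i) B (\<lambda>x. ennreal \<bar>f x - c\<bar>))"
        using finI i0 by (simp add: sum.remove K_def)
      also have "\<dots> \<le> K c + (\<Sum>i\<in>I - {i0}. D i i0 + K c)"
        by (intro add_left_mono sum_mono step3) auto
      also have "\<dots> = of_nat (card I) * K c + Dsum"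
      proof -
        have s1: "(\<Sum>i\<in>I - {i0}. D i i0 + K c) = Dsum + of_nat (card (I - {i0})) * K c"
          by (simp add: sum.distrib Dsum_def)
        have "card I = Suc (card (I - {i0}))" using card_Suc_Diff1[OF finI i0] by simp
        then have s2: "of_nat (card I) * K c = K c + of_nat (card (I - {i0})) * K c"
          by (simp add: distrib_right)
        show ?thesis unfolding s1 s2 by (simp add: ac_simps)
      qed
      also have "\<dots> \<le> ennreal (real N) * K c + Dsum"
        using cardI by (intro add_right_mono mult_right_mono) (auto simp: ennreal_of_nat_eq_real_of_nat)
      finally show ?thesis .
    qed
    have step5: "Osc m f B \<le> ennreal (real N) * Osc (nu i0) f B + Dsum"
    proof (rule ennreal_le_epsilon)
      fix e :: real assume fin: "ennreal (real N) * Osc (nu i0) f B + Dsum < top" and e: "0 < e"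
      have Npos: "0 < real N" using N1 by simp
      have "Osc (nu i0) f B < top" using fin Npos
        by (auto simp: ennreal_mult_less_top top.not_eq_extremum)
      then have "Osc (nu i0) f B < Osc (nu i0) f B + ennreal (e / real N)"
        using e Npos by (simp add: ennreal_add_left_cancel_less)
      then obtain c where c: "K c < Osc (nu i0) f B + ennreal (e / real N)"
        unfolding Osc_def[of "nu i0"] K_def by (auto simp: INF_less_iff)
      have "Osc m f B \<le> ennreal (real N) * K c + Dsum" by (rule each_c)
      also have "\<dots> \<le> ennreal (real N) * (Osc (nu i0) f B + ennreal (e / real N)) + Dsum"
        using c by (intro add_right_mono mult_left_mono) auto
      also have "\<dots> = ennreal (real N) * Osc (nu i0) f B + Dsum + ennreal e"
      proof -
        have "ennreal (real N) * ennreal (e / real N) = ennreal (real N * (e / real N))"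
          by (rule ennreal_mult'[symmetric]) simp
        also have "real N * (e / real N) = e" using Npos by simp
        finally have ee: "ennreal (real N) * ennreal (e / real N) = ennreal e" .
        show ?thesis by (simp add: distrib_left ee ac_simps)
      qed
      finally show "Osc m f B \<le> ennreal (real N) * Osc (nu i0) f B + Dsum + ennreal e" .
    qed
    have "Dsum \<le> (\<Sum>i\<in>I. \<Sum>j\<in>I - {i}. D i j)"
    proof -
      have "Dsum \<le> (\<Sum>i\<in>I - {i0}. \<Sum>j\<in>I - {i}. D i j)"
        unfolding Dsum_def by (intro sum_mono member_le_sum) (use finI i0 in auto)
      also have "\<dots> \<le> (\<Sum>i\<in>I. \<Sum>j\<in>I - {i}. D i j)"
        by (rule sum_mono2) (use finI in auto)
      finally show ?thesis .
    qed
    also have "\<dots> \<le> ennreal (real N) * (\<Sum>i\<in>I. \<Sum>j\<in>I - {i}. D i j)"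
    proof -
      have "1 \<le> ennreal (real N)" using N1 by simp
      then show ?thesis using mult_right_mono[of 1 "ennreal (real N)"] by simp
    qed
    finally have d2: "Dsum \<le> ennreal (real N) * (\<Sum>i\<in>I. \<Sum>j\<in>I - {i}. D i j)" .
    have d1: "ennreal (real N) * Osc (nu i0) f B \<le> ennreal (real N) * (\<Sum>i\<in>I. Osc (nu i) f B)"
      by (intro mult_left_mono member_le_sum[OF i0]) (auto simp: finI)
    have "Osc m f B \<le> ennreal (real N) * (\<Sum>i\<in>I. Osc (nu i) f B) + ennreal (real N) * (\<Sum>i\<in>I. \<Sum>j\<in>I - {i}. D i j)"
      using step5 d1 d2 by (meson add_mono order_trans)
    then show ?thesis by (simp add: distrib_left D_def)
  qed
qed

theorem lemma3p6:
  fixes mu :: "'a::polish_space measure" and p thl th :: real and N :: nat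
    and ths :: "nat \<Rightarrow> real" and S :: "nat \<Rightarrow> 'a set"
  assumes mu: "mu_standing mu" and dbl: "unif_loc_doubling mu"
    and p: "1 < p" and PI: "weak_local_poincare mu p"
    and thl: "0 \<le> thl" "thl < min p (lower_dim mu)"
    and th: "thl \<le> th" "th < p"
    and N: "2 \<le> N"
    and ths0: "0 \<le> ths 1"
    and ths_mono: "\<And>i j. 1 \<le> i \<Longrightarrow> i < j \<Longrightarrow> j \<le> N \<Longrightarrow> ths i < ths j"
    and thsN: "ths N = thl"
    and S: "\<And>i. i \<in> {1..N} \<Longrightarrow> S i \<in> ADR mu (ths i)"
  shows "\<forall>c\<ge>1. \<exists>C>0. \<forall>k::nat. \<forall>xb::'a. \<forall>I.
     I \<subseteq> {1..N}
     \<and> (\<forall>i\<in>I. \<exists>xi\<in>S i. cball xi ((1/2)^k) \<subseteq> cball xb (c * (1/2)^k))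
     \<and> (\<forall>j\<in>{1..N} - I. cball xb (c * (1/2)^k) \<inter> S j = {})
     \<longrightarrow> (\<forall>f. loc_integrable (mk mu th ths S N 0) f \<longrightarrow>
          Osc (mk mu th ths S N k) f (cball xb (c * (1/2)^k))
          \<le> ennreal C * ((\<Sum>i\<in>I. Osc (hrestr mu (ths i) (S i)) f (cball xb (c * (1/2)^k)))
             + (\<Sum>i\<in>I. \<Sum>j\<in>I - {i}.
                 Av (hrestr mu (ths i) (S i)) (cball xb (c * (1/2)^k))
                   (\<lambda>y. Av (hrestr mu (ths j) (S j)) (cball xb (c * (1/2)^k))
                          (\<lambda>z. ennreal \<bar>f y - f z\<bar>)))))"
proof (intro allI impI)
  fix c :: real assume c: "1 \<le> c"
  have Sclosed: "closed (S i)" if "i \<in> {1..N}" for i using S[OF that] by (simp add: ADR_def)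
  show "\<exists>C>0. \<forall>k::nat. \<forall>xb::'a. \<forall>I.
     I \<subseteq> {1..N}
     \<and> (\<forall>i\<in>I. \<exists>xi\<in>S i. cball xi ((1/2)^k) \<subseteq> cball xb (c * (1/2)^k))
     \<and> (\<forall>j\<in>{1..N} - I. cball xb (c * (1/2)^k) \<inter> S j = {})
     \<longrightarrow> (\<forall>f. loc_integrable (mk mu th ths S N 0) f \<longrightarrow>
          Osc (mk mu th ths S N k) f (cball xb (c * (1/2)^k))
          \<le> ennreal C * ((\<Sum>i\<in>I. Osc (hrestr mu (ths i) (S i)) f (cball xb (c * (1/2)^k)))
             + (\<Sum>i\<in>I. \<Sum>j\<in>I - {i}.
                 Av (hrestr mu (ths i) (S i)) (cball xb (c * (1/2)^k))
                   (\<lambda>y. Av (hrestr mu (ths j) (S j)) (cball xb (c * (1/2)^k))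
                          (\<lambda>z. ennreal \<bar>f y - f z\<bar>)))))"
  proof (rule exI[of _ "real N"], intro conjI allI impI)
    show "0 < real N" using N by simp
    fix k :: nat and xb :: 'a and I :: "nat set" and f :: "'a \<Rightarrow> real"
    assume H: "I \<subseteq> {1..N}
     \<and> (\<forall>i\<in>I. \<exists>xi\<in>S i. cball xi ((1/2)^k) \<subseteq> cball xb (c * (1/2)^k))
     \<and> (\<forall>j\<in>{1..N} - I. cball xb (c * (1/2)^k) \<inter> S j = {})"
      and fi: "loc_integrable (mk mu th ths S N 0) f"
    define B where "B = cball xb (c * (1/2)^k)"
    have I: "I \<subseteq> {1..N}" using H by blast
    have B: "B \<in> sets borel" by (simp add: B_def borel_closed)
    have f0: "f \<in> borel_measurable (mk mu th ths S N 0)" using fi by (simp add: loc_integrable_def)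
    have eqm: "(borel_measurable (mk mu th ths S N 0) :: ('a \<Rightarrow> real) set) = borel_measurable borel"
      by (rule measurable_cong_sets) simp_all
    have f: "f \<in> borel_measurable borel" using f0 eqm by simp
    have em: "emeasure (mk mu th ths S N k) A =
        (\<Sum>i\<in>{1..N}. ennreal (2 powr (real k * (th - ths i))) * emeasure (hrestr mu (ths i) (S i)) A)"
      if A: "A \<in> sets borel" for A
    proof -
      have "emeasure (mk mu th ths S N k) A =
        (\<Sum>i\<in>{1..N}. ennreal (2 powr (real k * (th - ths i))) * hmeasure mu (ths i) (A \<inter> S i))"
        by (rule emeasure_mk[OF Sclosed A])
      also have "\<dots> = (\<Sum>i\<in>{1..N}. ennreal (2 powr (real k * (th - ths i))) * emeasure (hrestr mu (ths i) (S i)) A)"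
        by (rule sum.cong) (auto simp: emeasure_hrestr[OF Sclosed A])
      finally show ?thesis .
    qed
    have pos: "0 < emeasure (hrestr mu (ths i) (S i)) B" if i: "i \<in> I" for i
    proof -
      have iN: "i \<in> {1..N}" using i I by blast
      obtain xi where xi: "xi \<in> S i" "cball xi ((1/2)^k) \<subseteq> B" using H i by (auto simp: B_def)
      obtain k1 k2 :: real where k: "k1 > 0"
        "\<And>x r. x \<in> S i \<Longrightarrow> r \<in> {0<..1} \<Longrightarrow>
           ennreal k1 * emeasure mu (cball x r) * ennreal (r powr (-ths i)) \<le> hmeasure mu (ths i) (cball x r \<inter> S i)"
        using S[OF iN] unfolding ADR_def by blast
      have r: "((1/2::real)^k) \<in> {0<..1}" by (simp add: power_le_one)
      have mupos: "0 < emeasure mu (cball xi ((1/2)^k))" using mu by (simp add: mu_standing_def)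
      have "0 < ennreal k1 * emeasure mu (cball xi ((1/2)^k)) * ennreal (((1/2::real)^k) powr (-ths i))"
        using k(1) mupos by (simp add: ennreal_zero_less_mult_iff)
      also have "\<dots> \<le> hmeasure mu (ths i) (cball xi ((1/2)^k) \<inter> S i)" by (rule k(2)[OF xi(1) r])
      also have "\<dots> \<le> hmeasure mu (ths i) (B \<inter> S i)"
        unfolding hmeasure_eq by (rule hm_mono) (use xi in blast)
      also have "\<dots> = emeasure (hrestr mu (ths i) (S i)) B" by (rule emeasure_hrestr[OF Sclosed[OF iN] B, symmetric])
      finally show ?thesis .
    qed
    have zero: "emeasure (hrestr mu (ths j) (S j)) B = 0" if j: "j \<in> {1..N} - I" for j
    proof -
      have "B \<inter> S j = {}" using H j by (auto simp: B_def)
      then show ?thesis using emeasure_hrestr[OF Sclosed B, of j mu "ths j"] j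
        by (simp add: hmeasure_eq hm_empty)
    qed
    have "Osc (mk mu th ths S N k) f B \<le> ennreal (real N) * ((\<Sum>i\<in>I. Osc (hrestr mu (ths i) (S i)) f B)
       + (\<Sum>i\<in>I. \<Sum>j\<in>I - {i}. Av (hrestr mu (ths i) (S i)) B
            (\<lambda>y. Av (hrestr mu (ths j) (S j)) B (\<lambda>z. ennreal \<bar>f y - f z\<bar>))))"
    proof (rule core[where nu = "\<lambda>i. hrestr mu (ths i) (S i)" and w = "\<lambda>i. 2 powr (real k * (th - ths i))"])
      show "1 \<le> N" using N by simp
    qed (use em B I pos zero f in auto)
    then show "Osc (mk mu th ths S N k) f (cball xb (c * (1/2)^k))
          \<le> ennreal (real N) * ((\<Sum>i\<in>I. Osc (hrestr mu (ths i) (S i)) f (cball xb (c * (1/2)^k)))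
             + (\<Sum>i\<in>I. \<Sum>j\<in>I - {i}.
                 Av (hrestr mu (ths i) (S i)) (cball xb (c * (1/2)^k))
                   (\<lambda>y. Av (hrestr mu (ths j) (S j)) (cball xb (c * (1/2)^k))
                          (\<lambda>z. ennreal \<bar>f y - f z\<bar>))))"
      by (simp add: B_def)
  qed
qed

end
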